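(* Let $r>1$ and $C_r=\lceil 2\log_r 20\rceil$. There exists $n_0>0$, depending on $r$, such that the following holds. Let $k,\ell,m$ be positive integers such that the $(k,\ell,m)$-metafunnel has $n$ vertices with $n\ge n_0$, $m\ge r^{\sqrt{\log_r n}}$ and $2\le k\le\sqrt{\log_r n}$. Fix $x_0\in V_k$ and run the Moran process with fitness $r$ on the metafunnel with initial mutant $x_0$. Then the probability that the process goes extinct is at least $\frac{1}{r^k(\log n)^{C_r+7}}$.
   Context: Logarithms are natural unless a base is given. Moran process: given a directed graph $G$ and fitness $r$, one vertex $x_0$ is a mutant, the rest non-mutants. At each step a vertex $v$ is chosen with probability proportional to fitness (mutants $r$, non-mutants $1$), an out-neighbour $w$ of $v$ is chosen uniformly at random and the state of $v$ is copied to $w$. Extinction: eventually no vertex is a mutant. The $(k,\ell,m)$-metafunnel has vertex set $V_0\cup V_1\cup\dots\cup V_k$ (disjoint), where $V_0=\{v^*\}$ and for $i\in[k]$, $V_i$ is the disjoint union of sets $V_{i,1},\dots,V_{i,\ell}$ each of size $m^i$ (so $n=1+\ell\sum_{i=1}^k m^i$); its edge set is $(V_0\times V_k)\cup(V_1\times V_0)\cup\bigcup_{i\in[k-1]}\bigcup_{j\in[\ell]}(V_{i+1,j}\times V_{i,j})$. *)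

theory Defs
  imports Complex_Main
begin

text \<open>Vertex set V (finite), edge relation E (E v w: edge from v to w), fitness r.
  A state is the set S of mutant vertices.\<close>

definition fitness :: "real \<Rightarrow> 'a set \<Rightarrow> 'a \<Rightarrow> real" where
  "fitness r S v = (if v \<in> S then r else 1)"

definition total_fitness :: "'a set \<Rightarrow> real \<Rightarrow> 'a set \<Rightarrow> real" where
  "total_fitness V r S = (\<Sum>v\<in>V. fitness r S v)"

definition out_nbrs :: "'a set \<Rightarrow> ('a \<Rightarrow> 'a \<Rightarrow> bool) \<Rightarrow> 'a \<Rightarrow> 'a set" where
  "out_nbrs V E v = {w \<in> V. E v w}"

definition moran_update :: "'a set \<Rightarrow> 'a \<Rightarrow> 'a \<Rightarrow> 'a set" where
  "moran_update S v w = (if v \<in> S then insert w S else S - {w})"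

fun extinct_within :: "'a set \<Rightarrow> ('a \<Rightarrow> 'a \<Rightarrow> bool) \<Rightarrow> real \<Rightarrow> nat \<Rightarrow> 'a set \<Rightarrow> real" where
  "extinct_within V E r 0 S = (if S = {} then 1 else 0)"
| "extinct_within V E r (Suc t) S =
     (if S = {} then 1 else
      (\<Sum>v\<in>V. \<Sum>w\<in>out_nbrs V E v.
          (fitness r S v / total_fitness V r S) * (1 / real (card (out_nbrs V E v)))
          * extinct_within V E r t (moran_update S v w)))"

text \<open>Extinction probability = probability of eventually reaching the empty state
  = limit (supremum) of the nondecreasing probabilities of extinction within t steps.\<close>
definition extinction_prob :: "'a set \<Rightarrow> ('a \<Rightarrow> 'a \<Rightarrow> bool) \<Rightarrow> real \<Rightarrow> 'a set \<Rightarrow> real" where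
  "extinction_prob V E r S = (SUP t. extinct_within V E r t S)"

text \<open>Vertices: v* = (0,0,0); V_{i,j} = {(i,j,t) | t < m^i} for 1 \<le> i \<le> k, 1 \<le> j \<le> l.\<close>

definition mf_layer :: "nat \<Rightarrow> nat \<Rightarrow> nat \<Rightarrow> nat \<Rightarrow> (nat \<times> nat \<times> nat) set" where
  "mf_layer k l m i = {(i', j, t). i' = i \<and> 1 \<le> i \<and> i \<le> k \<and> 1 \<le> j \<and> j \<le> l \<and> t < m ^ i}"

definition mf_V :: "nat \<Rightarrow> nat \<Rightarrow> nat \<Rightarrow> (nat \<times> nat \<times> nat) set" where
  "mf_V k l m = {(0,0,0)} \<union> (\<Union>i\<in>{1..k}. mf_layer k l m i)"

definition mf_E :: "nat \<Rightarrow> nat \<Rightarrow> nat \<Rightarrow> (nat \<times> nat \<times> nat) \<Rightarrow> (nat \<times> nat \<times> nat) \<Rightarrow> bool" where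
  "mf_E k l m u v \<longleftrightarrow> u \<in> mf_V k l m \<and> v \<in> mf_V k l m \<and>
     ((u = (0,0,0) \<and> v \<in> mf_layer k l m k)
      \<or> (u \<in> mf_layer k l m 1 \<and> v = (0,0,0))
      \<or> (\<exists>i\<in>{1..k-1}. u \<in> mf_layer k l m (i+1) \<and> v \<in> mf_layer k l m i
            \<and> fst (snd u) = fst (snd v)))"

end

theory Submission
  imports Defs
begin


definition Tm :: "'a set \<Rightarrow> ('a \<Rightarrow> 'a \<Rightarrow> bool) \<Rightarrow> real \<Rightarrow> ('a set \<Rightarrow> real) \<Rightarrow> 'a set \<Rightarrow> real" where
  "Tm V E r h S = (\<Sum>v\<in>V. \<Sum>w\<in>out_nbrs V E v.
          (fitness r S v / total_fitness V r S) * (1 / real (card (out_nbrs V E v))) * h (moran_update S v w))"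

locale mgraph =
  fixes V :: "'a set" and E :: "'a \<Rightarrow> 'a \<Rightarrow> bool" and r :: real
  assumes finV: "finite V" and Vne: "V \<noteq> {}" and r1: "r \<ge> 1"
    and out_ne: "\<And>v. v \<in> V \<Longrightarrow> out_nbrs V E v \<noteq> {}"
begin

abbreviation "ext \<equiv> extinct_within V E r"
abbreviation "p \<equiv> extinction_prob V E r"
abbreviation "T \<equiv> Tm V E r"
abbreviation "W S \<equiv> total_fitness V r S"
abbreviation "outv v \<equiv> out_nbrs V E v"
definition cf :: "'a set \<Rightarrow> 'a \<Rightarrow> real" where
  "cf S v = (fitness r S v / total_fitness V r S) * (1 / real (card (out_nbrs V E v)))"

lemma T_eq: "T h S = (\<Sum>v\<in>V. \<Sum>w\<in>outv v. cf S v * h (moran_update S v w))"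
  by (simp add: Tm_def cf_def)

lemma fin_out: "finite (outv v)"
  using finV by (simp add: out_nbrs_def)

lemma out_sub: "outv v \<subseteq> V" by (auto simp: out_nbrs_def)

lemma fit_pos: "fitness r S v > 0" "fitness r S v \<ge> 1"
  using r1 by (auto simp: fitness_def)

lemma W_pos: "W S > 0"
proof -
  obtain v where "v \<in> V" using Vne by auto
  then have "W S \<ge> fitness r S v" unfolding total_fitness_def
    by (intro member_le_sum) (auto simp: finV intro: order.trans[OF _ fit_pos(2)])
  then show ?thesis using fit_pos(1)[of S v] by linarith
qed

lemma cf_nonneg: "cf S v \<ge> 0"
  using fit_pos(1)[of S v] W_pos[of S] by (auto simp: cf_def)

lemma cf_pos: "v \<in> V \<Longrightarrow> cf S v > 0"
  using fit_pos(1)[of S v] W_pos[of S] out_ne[of v] fin_out[of v]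
  by (auto simp: card_gt_0_iff cf_def)

lemma coef_sum: "(\<Sum>v\<in>V. \<Sum>w\<in>outv v. cf S v) = 1"
proof -
  have "(\<Sum>w\<in>outv v. cf S v) = fitness r S v / W S" if "v \<in> V" for v
    using out_ne[OF that] fin_out[of v] by (simp add: card_gt_0_iff cf_def)
  then have "(\<Sum>v\<in>V. \<Sum>w\<in>outv v. cf S v) = (\<Sum>v\<in>V. fitness r S v / W S)"
    by (rule sum.cong[OF refl])
  also have "\<dots> = W S / W S" unfolding total_fitness_def by (rule sum_divide_distrib[symmetric])
  also have "\<dots> = 1" using W_pos[of S] by simp
  finally show ?thesis .
qed

lemma T_const: "T (\<lambda>_. c) S = c"
proof -
  have "T (\<lambda>_. c) S = (\<Sum>v\<in>V. \<Sum>w\<in>outv v. cf S v) * c"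
    by (simp add: T_eq sum_distrib_right mult.assoc)
  then show ?thesis using coef_sum by simp
qed

lemma T_mono: "(\<And>S'. h S' \<le> h' S') \<Longrightarrow> T h S \<le> T h' S"
  unfolding T_eq
  by (intro sum_mono mult_left_mono) (auto intro: cf_nonneg)

lemma T_minus_const: "T h S - c = (\<Sum>v\<in>V. \<Sum>w\<in>outv v. cf S v * (h (moran_update S v w) - c))"
proof -
  have "T h S - c = T h S - (\<Sum>v\<in>V. \<Sum>w\<in>outv v. cf S v) * c" using coef_sum by simp
  also have "\<dots> = (\<Sum>v\<in>V. \<Sum>w\<in>outv v. cf S v * (h (moran_update S v w) - c))"
    unfolding T_eq by (simp only: right_diff_distrib sum_subtractf sum_distrib_right)
  finally show ?thesis .
qed

lemma T_diff: "T h S - T h' S = T (\<lambda>S. h S - h' S) S"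
  by (simp add: T_eq sum_subtractf[symmetric] right_diff_distrib)

lemma ext_Suc: "S \<noteq> {} \<Longrightarrow> ext (Suc t) S = T (ext t) S"
  by (simp add: Tm_def)

declare extinct_within.simps(2)[simp del]

lemma ext_empty: "ext t {} = 1"
  by (cases t) (auto simp: extinct_within.simps)

lemma ext_bounds: "0 \<le> ext t S \<and> ext t S \<le> 1"
proof (induction t arbitrary: S)
  case 0 then show ?case by simp
next
  case (Suc t)
  show ?case
  proof (cases "S = {}")
    case True then show ?thesis by (simp add: ext_empty)
  next
    case False
    have "T (\<lambda>_. 0) S \<le> T (ext t) S" "T (ext t) S \<le> T (\<lambda>_. 1) S"
      using Suc by (auto intro!: T_mono)
    then show ?thesis using False by (simp add: ext_Suc T_const)
  qed
qed

lemma ext_mono: "ext t S \<le> ext (Suc t) S"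
proof (induction t arbitrary: S)
  case 0 show ?case
  proof (cases "S = {}")
    case True then show ?thesis by (simp add: ext_empty)
  next
    case False then have "ext 0 S = 0" by simp
    with ext_bounds[of "Suc 0" S] show ?thesis by linarith
  qed
next
  case (Suc t)
  show ?case
  proof (cases "S = {}")
    case True then show ?thesis by (simp add: ext_empty)
  next
    case False
    then show ?thesis using Suc ext_Suc[OF False, of t] ext_Suc[OF False, of "Suc t"] T_mono[of "ext t" "ext (Suc t)" S] by simp
  qed
qed

lemma ext_incseq: "incseq (\<lambda>t. ext t S)"
  by (rule incseq_SucI) (rule ext_mono)

lemma ext_bdd: "bdd_above (range (\<lambda>t. ext t S))"
  using ext_bounds by (intro bdd_aboveI2[where M=1]) auto

lemma ext_le_p: "ext t S \<le> p S"
  unfolding extinction_prob_def by (rule cSUP_upper[OF _ ext_bdd]) simp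

lemma p_bounds: "0 \<le> p S" "p S \<le> 1"
  using ext_le_p[of 0 S] ext_bounds[of 0 S] apply simp
  unfolding extinction_prob_def by (rule cSUP_least) (auto simp: ext_bounds)

lemma p_empty: "p {} = 1"
  using ext_le_p[of 0 "{}"] p_bounds(2)[of "{}"] by simp

lemma ext_lim: "(\<lambda>t. ext t S) \<longlonglongrightarrow> p S"
  unfolding extinction_prob_def by (rule LIMSEQ_incseq_SUP[OF ext_bdd ext_incseq])

lemma T_p: "S \<noteq> {} \<Longrightarrow> T p S \<le> p S"
proof -
  assume S: "S \<noteq> {}"
  have "(\<lambda>t. T (ext t) S) \<longlonglongrightarrow> T p S"
    unfolding T_eq by (intro tendsto_sum tendsto_mult_left ext_lim)
  moreover have "\<forall>t. T (ext t) S \<le> p S"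
    using ext_le_p[of "Suc _" S] S by (simp add: ext_Suc)
  ultimately show ?thesis by (intro LIMSEQ_le_const2) auto
qed

lemma update_sub: "S \<subseteq> V \<Longrightarrow> w \<in> outv v \<Longrightarrow> moran_update S v w \<subseteq> V"
  using out_sub by (auto simp: moran_update_def)

lemma max_principle:
  fixes g :: "'a set \<Rightarrow> real"
  assumes g0: "g {} \<le> 1" and gV: "g V \<le> 0"
    and sub: "\<And>S. S \<subseteq> V \<Longrightarrow> S \<noteq> {} \<Longrightarrow> S \<noteq> V \<Longrightarrow> p S < g S \<Longrightarrow> g S \<le> T g S"
    and cross: "\<And>S. S \<subseteq> V \<Longrightarrow> S \<noteq> {} \<Longrightarrow> S \<noteq> V \<Longrightarrow> \<exists>v\<in>V-S. \<exists>w\<in>S. E v w"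
    and S0: "S0 \<subseteq> V"
  shows "g S0 \<le> p S0"
proof (rule ccontr)
  assume "\<not> g S0 \<le> p S0"
  define d where "d S = g S - p S" for S
  have d0: "d S0 > 0" using \<open>\<not> g S0 \<le> p S0\<close> by (simp add: d_def)
  define M where "M = Max (d ` Pow V)"
  have finP: "finite (d ` Pow V)" using finV by simp
  have dleM: "S \<subseteq> V \<Longrightarrow> d S \<le> M" for S unfolding M_def by (rule Max_ge[OF finP]) auto
  have "M \<in> d ` Pow V" unfolding M_def by (rule Max_in[OF finP]) auto
  then obtain S1 where S1: "S1 \<subseteq> V" "d S1 = M" by auto
  have Mpos: "M > 0" using dleM[OF S0] d0 by simp
  obtain S where S: "S \<subseteq> V \<and> d S = M" and Smin: "\<And>S'. S' \<subseteq> V \<and> d S' = M \<Longrightarrow> card S \<le> card S'"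
    using ex_has_least_nat[of "\<lambda>S. S \<subseteq> V \<and> d S = M" S1 card] S1 by blast
  have "S \<noteq> {}" using S Mpos g0 p_empty by (auto simp: d_def)
  have "S \<noteq> V" using S Mpos gV p_bounds(1)[of V] by (auto simp: d_def)
  have "p S < g S" using S Mpos by (simp add: d_def)
  then have gT: "g S \<le> T g S" using sub S \<open>S \<noteq> {}\<close> \<open>S \<noteq> V\<close> by blast
  have "M \<le> T g S - T p S" using gT T_p[OF \<open>S \<noteq> {}\<close>] S by (simp add: d_def)
  also have "(\<lambda>S. g S - p S) = d" by (rule ext) (simp add: d_def)
  then have "T g S - T p S = T d S" by (simp add: T_diff)
  finally have "T d S - M \<ge> 0" using \<open>T g S - T p S = T d S\<close> by simp
  then have sum0: "(\<Sum>v\<in>V. \<Sum>w\<in>outv v. cf S v * (M - d (moran_update S v w))) \<le> 0"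
  proof -
    have "(\<Sum>v\<in>V. \<Sum>w\<in>outv v. cf S v * (M - d (moran_update S v w)))
        = - (\<Sum>v\<in>V. \<Sum>w\<in>outv v. cf S v * (d (moran_update S v w) - M))"
      by (simp add: sum_negf[symmetric] algebra_simps)
    then show ?thesis using \<open>T d S - M \<ge> 0\<close> by (simp add: T_minus_const)
  qed
  have nonneg: "0 \<le> cf S v * (M - d (moran_update S v w))" if "v \<in> V" "w \<in> outv v" for v w
    using cf_nonneg[of S v] dleM[OF update_sub[OF _ that(2)]] S by auto
  have inner_nn: "0 \<le> (\<Sum>w\<in>outv v. cf S v * (M - d (moran_update S v w)))" if "v \<in> V" for v
    using nonneg that by (intro sum_nonneg) auto
  have "(\<Sum>v\<in>V. \<Sum>w\<in>outv v. cf S v * (M - d (moran_update S v w))) = 0"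
  proof -
    have "0 \<le> (\<Sum>v\<in>V. \<Sum>w\<in>outv v. cf S v * (M - d (moran_update S v w)))"
      by (rule sum_nonneg) (rule inner_nn)
    then show ?thesis using sum0 by linarith
  qed
  then have "\<forall>v\<in>V. (\<Sum>w\<in>outv v. cf S v * (M - d (moran_update S v w))) = 0"
    using sum_nonneg_eq_0_iff[OF finV, of "\<lambda>v. (\<Sum>w\<in>outv v. cf S v * (M - d (moran_update S v w)))"] inner_nn by auto
  then have allz: "\<forall>v\<in>V. \<forall>w\<in>outv v. cf S v * (M - d (moran_update S v w)) = 0"
    using sum_nonneg_eq_0_iff[OF fin_out, of _ "\<lambda>w. cf S _ * (M - d (moran_update S _ w))"] nonneg by auto
  obtain v w where vw: "v \<in> V" "v \<notin> S" "w \<in> S" "E v w"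
    using cross[OF _ \<open>S \<noteq> {}\<close> \<open>S \<noteq> V\<close>] S by blast
  have "w \<in> outv v" using vw S by (auto simp: out_nbrs_def)
  then have "d (moran_update S v w) = M" using allz vw(1) cf_pos[OF vw(1), of S] by auto
  moreover have "moran_update S v w = S - {w}" using vw by (simp add: moran_update_def)
  ultimately have "card S \<le> card (S - {w})" using Smin[of "S - {w}"] S by auto
  moreover have "card (S - {w}) < card S"
    using vw(3) S finV by (meson card_Diff1_less finite_subset)
  ultimately show False by simp
qed

definition psi :: "('a \<Rightarrow> real) \<Rightarrow> 'a set \<Rightarrow> 'a \<Rightarrow> 'a \<Rightarrow> real" where
  "psi \<pi> S v w = (if v \<in> S then (if w \<in> S then 0 else exp (- \<pi> w) - 1)
                   else (if w \<in> S then exp (\<pi> w) - 1 else 0))"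

lemma f_upd:
  assumes "finite S"
  shows "exp (- (\<Sum>x\<in>moran_update S v w. \<pi> x)) - exp (- (\<Sum>x\<in>S. \<pi> x))
       = exp (- (\<Sum>x\<in>S. \<pi> x)) * psi \<pi> S v w"
proof (cases "v \<in> S")
  case True
  then show ?thesis using assms
    by (cases "w \<in> S") (auto simp: moran_update_def psi_def insert_absorb exp_add[symmetric] algebra_simps)
next
  case False
  then show ?thesis using assms
    by (cases "w \<in> S") (auto simp: moran_update_def psi_def sum_diff1 exp_add[symmetric] algebra_simps)
qed

lemma pot:
  assumes "finite S"
  shows "T (\<lambda>S. exp (- (\<Sum>x\<in>S. \<pi> x)) - c) S - (exp (- (\<Sum>x\<in>S. \<pi> x)) - c)
     = exp (- (\<Sum>x\<in>S. \<pi> x)) / W S *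
       (\<Sum>v\<in>V. \<Sum>w\<in>outv v. fitness r S v * psi \<pi> S v w / real (card (outv v)))"
proof -
  let ?f = "\<lambda>S. exp (- (\<Sum>x\<in>S. \<pi> x))"
  have "T (\<lambda>S. ?f S - c) S - (?f S - c) = (\<Sum>v\<in>V. \<Sum>w\<in>outv v. cf S v * ((?f (moran_update S v w) - c) - (?f S - c)))"
    by (rule T_minus_const)
  also have "\<dots> = (\<Sum>v\<in>V. \<Sum>w\<in>outv v. ?f S / W S * (fitness r S v * psi \<pi> S v w / real (card (outv v))))"
  proof (intro sum.cong refl)
    fix v w
    have "(?f (moran_update S v w) - c) - (?f S - c) = ?f S * psi \<pi> S v w"
      using f_upd[OF assms] by simp
    then show "cf S v * ((?f (moran_update S v w) - c) - (?f S - c)) =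
        ?f S / W S * (fitness r S v * psi \<pi> S v w / real (card (outv v)))"
      by (simp add: cf_def)
  qed
  also have "\<dots> = ?f S / W S * (\<Sum>v\<in>V. \<Sum>w\<in>outv v. fitness r S v * psi \<pi> S v w / real (card (outv v)))"
    by (simp add: sum_distrib_left)
  finally show ?thesis .
qed

end



definition blk :: "nat \<Rightarrow> nat \<Rightarrow> nat \<Rightarrow> (nat \<times> nat \<times> nat) set" where
  "blk m i j = (\<lambda>t. (i, j, t)) ` {..<m ^ i}"

lemma card_blk: "card (blk m i j) = m ^ i"
  unfolding blk_def by (subst card_image) (auto simp: inj_on_def)

lemma layer_eq: "mf_layer k l m i = (if 1 \<le> i \<and> i \<le> k then (\<lambda>(j,t). (i,j,t)) ` ({1..l} \<times> {..<m^i}) else {})"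
  unfolding mf_layer_def by (auto simp: image_iff)

lemma card_layer: "1 \<le> i \<Longrightarrow> i \<le> k \<Longrightarrow> card (mf_layer k l m i) = l * m ^ i"
  unfolding layer_eq by (simp, subst card_image) (auto simp: inj_on_def)

lemma mem_layer: "(a,b,c) \<in> mf_layer k l m i \<longleftrightarrow> a = i \<and> 1 \<le> i \<and> i \<le> k \<and> 1 \<le> b \<and> b \<le> l \<and> c < m ^ i"
  unfolding mf_layer_def by auto

lemma mem_V: "(a,b,c) \<in> mf_V k l m \<longleftrightarrow> (a,b,c) = (0,0,0) \<or> (1 \<le> a \<and> a \<le> k \<and> 1 \<le> b \<and> b \<le> l \<and> c < m ^ a)"
  unfolding mf_V_def by (auto simp: mem_layer)

lemma fin_V: "finite (mf_V k l m)"
  unfolding mf_V_def layer_eq by auto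

lemma mem_E: "2 \<le> k \<Longrightarrow> mf_E k l m (a,b,c) (a',b',c') \<longleftrightarrow> (a,b,c) \<in> mf_V k l m \<and> (a',b',c') \<in> mf_V k l m \<and>
   (((a,b,c) = (0,0,0) \<and> a' = k) \<or> (a = 1 \<and> (a',b',c') = (0,0,0)) \<or> (2 \<le> a \<and> a' + 1 = a \<and> b = b'))"
  unfolding mf_E_def
  by (auto simp: mem_layer mem_V)

locale mfun =
  fixes k l m :: nat
  assumes k2: "2 \<le> k" and l1: "1 \<le> l" and m1: "1 \<le> m"
begin

abbreviation "VV \<equiv> mf_V k l m"
abbreviation "EE \<equiv> mf_E k l m"

lemma out_star: "out_nbrs VV EE (0,0,0) = mf_layer k l m k"
  apply (rule set_eqI, rename_tac x, case_tac x)
  using k2 by (auto simp: out_nbrs_def mem_E mem_V mem_layer)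

lemma out_one: "(1,j,t) \<in> VV \<Longrightarrow> out_nbrs VV EE (1,j,t) = {(0,0,0)}"
  apply (rule set_eqI, rename_tac x, case_tac x)
  using k2 by (auto simp: out_nbrs_def mem_E mem_V mem_layer)

lemma out_high: "(a,j,t) \<in> VV \<Longrightarrow> 2 \<le> a \<Longrightarrow> out_nbrs VV EE (a,j,t) = blk m (a-1) j"
  apply (rule set_eqI, rename_tac x, case_tac x)
  using k2 by (auto simp: out_nbrs_def mem_E mem_V mem_layer blk_def)

lemma in_star: "{v \<in> VV. EE v (0,0,0)} = mf_layer k l m 1"
  apply (rule set_eqI, rename_tac x, case_tac x)
  using k2 by (auto simp: mem_E mem_V mem_layer)

lemma in_mid: "(a,j,t) \<in> VV \<Longrightarrow> 1 \<le> a \<Longrightarrow> a < k \<Longrightarrow> {v \<in> VV. EE v (a,j,t)} = blk m (a+1) j"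
  apply (rule set_eqI, rename_tac x, case_tac x)
  using k2 by (auto simp: mem_E mem_V mem_layer blk_def)

lemma in_top: "(k,j,t) \<in> VV \<Longrightarrow> {v \<in> VV. EE v (k,j,t)} = {(0,0,0)}"
  apply (rule set_eqI, rename_tac x, case_tac x)
  using k2 by (auto simp: mem_E mem_V mem_layer)

lemma out_ne: "v \<in> VV \<Longrightarrow> out_nbrs VV EE v \<noteq> {}"
proof -
  assume v: "v \<in> VV"
  obtain a j t where vt: "v = (a,j,t)" by (cases v) auto
  have mpos: "m ^ i > 0" for i using m1 by simp
  show ?thesis
  proof (cases "a = 0")
    case True
    then have "v = (0,0,0)" using v vt by (auto simp: mem_V)
    moreover have "(k,1,0) \<in> mf_layer k l m k" using k2 l1 mpos[of k] by (simp add: mem_layer)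
    ultimately show ?thesis using out_star by auto
  next
    case False
    show ?thesis
    proof (cases "a = 1")
      case True then show ?thesis using out_one v vt by auto
    next
      case False
      then have "2 \<le> a" using \<open>a \<noteq> 0\<close> by simp
      moreover have "(a-1,j,0) \<in> blk m (a-1) j" using mpos[of "a-1"] by (auto simp: blk_def)
      ultimately show ?thesis using out_high v vt by auto
    qed
  qed
qed

lemma reach_down: "(a,j,t) \<in> VV \<Longrightarrow> 1 \<le> a \<Longrightarrow> EE\<^sup>*\<^sup>* (a,j,t) (0,0,0)"
proof (induction a arbitrary: t)
  case 0 then show ?case by simp
next
  case (Suc a)
  show ?case
  proof (cases "a = 0")
    case True
    then have "EE (Suc a,j,t) (0,0,0)" using Suc.prems k2 by (simp add: mem_E mem_V)
    then show ?thesis by auto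
  next
    case False
    have "(a,j,0) \<in> VV" using Suc.prems False m1 by (auto simp: mem_V)
    then have "EE (Suc a,j,t) (a,j,0)" using Suc.prems False k2 by (simp add: mem_E)
    moreover have "EE\<^sup>*\<^sup>* (a,j,0) (0,0,0)" using Suc.IH[OF \<open>(a,j,0) \<in> VV\<close>] False by simp
    ultimately show ?thesis by (rule converse_rtranclp_into_rtranclp)
  qed
qed

lemma reach_aux: "(a,j,t) \<in> VV \<Longrightarrow> 1 \<le> a \<Longrightarrow> a + d \<le> k \<Longrightarrow> 1 \<le> d \<Longrightarrow> EE\<^sup>*\<^sup>* (a+d,j,0) (a,j,t)"
proof (induction d)
  case 0 then show ?case by simp
next
  case (Suc d)
  have inV: "(a + Suc d, j, 0) \<in> VV" using Suc.prems m1 by (auto simp: mem_V)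
  show ?case
  proof (cases "d = 0")
    case True
    then have "EE (a + Suc d,j,0) (a,j,t)" using Suc.prems inV k2 by (simp add: mem_E)
    then show ?thesis by auto
  next
    case False
    have inV2: "(a + d, j, 0) \<in> VV" using Suc.prems m1 by (auto simp: mem_V)
    then have "EE (a + Suc d,j,0) (a + d,j,0)" using Suc.prems inV k2 by (simp add: mem_E)
    moreover have "EE\<^sup>*\<^sup>* (a+d,j,0) (a,j,t)" using Suc False by simp
    ultimately show ?thesis by (rule converse_rtranclp_into_rtranclp)
  qed
qed

lemma reach_up: "(a,j,t) \<in> VV \<Longrightarrow> 1 \<le> a \<Longrightarrow> EE\<^sup>*\<^sup>* (0,0,0) (a,j,t)"
proof -
  assume a: "(a,j,t) \<in> VV" "1 \<le> a"
  have star: "(0,0,0) \<in> VV" by (simp add: mem_V)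
  show ?thesis
  proof (cases "a = k")
    case True
    then have "EE (0,0,0) (a,j,t)" using a star k2 by (simp add: mem_E)
    then show ?thesis by auto
  next
    case False
    then have ak: "a < k" using a by (auto simp: mem_V)
    have kV: "(k,j,0) \<in> VV" using a m1 k2 by (auto simp: mem_V)
    then have "EE (0,0,0) (k,j,0)" using star k2 by (simp add: mem_E)
    moreover have "EE\<^sup>*\<^sup>* (a + (k-a),j,0) (a,j,t)" using reach_aux[OF a, of "k-a"] ak by simp
    ultimately show ?thesis using ak by (simp add: converse_rtranclp_into_rtranclp)
  qed
qed

lemma reach: "u \<in> VV \<Longrightarrow> w \<in> VV \<Longrightarrow> EE\<^sup>*\<^sup>* u w"
proof -
  assume u: "u \<in> VV" and w: "w \<in> VV"
  have "EE\<^sup>*\<^sup>* u (0,0,0)"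
  proof (cases "u = (0,0,0)")
    case False
    obtain a j t where "u = (a,j,t)" by (cases u) auto
    then show ?thesis using reach_down u False by (auto simp: mem_V)
  qed simp
  moreover have "EE\<^sup>*\<^sup>* (0,0,0) w"
  proof (cases "w = (0,0,0)")
    case False
    obtain a j t where "w = (a,j,t)" by (cases w) auto
    then show ?thesis using reach_up w False by (auto simp: mem_V)
  qed simp
  ultimately show ?thesis by simp
qed

end

definition piw :: "nat \<Rightarrow> nat \<Rightarrow> nat \<Rightarrow> real \<Rightarrow> nat \<times> nat \<times> nat \<Rightarrow> real" where
  "piw k l m r x = (if fst x = k then ln (1 + 2 * r ^ (k+1)) else 2 / real l * (r / real m) ^ (fst x + 1))"

lemma avg_le:
  fixes Y :: "'b \<Rightarrow> real"
  assumes "finite A" "A \<noteq> {}" "\<And>w. w \<in> A \<Longrightarrow> Y w \<le> B"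
  shows "(\<Sum>w\<in>A. Y w) / real (card A) \<le> B"
proof -
  have "(\<Sum>w\<in>A. Y w) \<le> (\<Sum>w\<in>A. B)" using assms by (intro sum_mono) auto
  also have "\<dots> = real (card A) * B" by simp
  finally show ?thesis using assms by (simp add: card_gt_0_iff divide_le_eq mult.commute)
qed

lemma cross_path: "R\<^sup>*\<^sup>* u w \<Longrightarrow> u \<notin> S \<Longrightarrow> w \<in> S \<Longrightarrow> \<exists>x y. R x y \<and> x \<notin> S \<and> y \<in> S"
proof (induction rule: rtranclp_induct)
  case base then show ?case by simp
next
  case (step y z)
  then show ?case by (cases "y \<in> S") auto
qed



locale mfr = mfun +
  fixes r :: real
  assumes r1: "1 < r" and mr: "2 * r \<le> real m" and mln: "2 * r / real m \<le> ln r"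
begin

sublocale G: mgraph VV EE r
proof
  show "finite VV" by (rule fin_V)
  have "(0,0,0) \<in> VV" by (simp add: mem_V)
  then show "VV \<noteq> {}" by auto
  show "1 \<le> r" using r1 by simp
qed (rule out_ne)

lemma cross: "S \<subseteq> VV \<Longrightarrow> S \<noteq> {} \<Longrightarrow> S \<noteq> VV \<Longrightarrow> \<exists>v\<in>VV-S. \<exists>w\<in>S. EE v w"
proof -
  assume S: "S \<subseteq> VV" "S \<noteq> {}" "S \<noteq> VV"
  obtain u where u: "u \<in> VV" "u \<notin> S" using S by auto
  obtain w where w: "w \<in> S" using S by auto
  have "EE\<^sup>*\<^sup>* u w" using reach[of u w] u w S by auto
  then obtain x y where "EE x y" "x \<notin> S" "y \<in> S" using cross_path u w by metis
  moreover then have "x \<in> VV" by (simp add: mf_E_def)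
  ultimately show ?thesis by blast
qed

abbreviation "\<pi> \<equiv> piw k l m r"
abbreviation "Y x \<equiv> 1 - exp (- \<pi> x)"
abbreviation "Z x \<equiv> exp (\<pi> x) - 1"
abbreviation "\<delta> \<equiv> 2 * r ^ (k+1) / (real l * real m ^ k)"

lemma mpos: "real m > 0" using m1 by simp
lemma rm: "r / real m \<le> 1/2" using mr r1 mpos by (simp add: divide_le_eq)

lemma pi_nonneg: "\<pi> x \<ge> 0"
  using r1 mpos by (auto simp: piw_def)

lemma Y_nonneg: "Y x \<ge> 0" using pi_nonneg[of x] by simp
lemma Y_le1: "Y x \<le> 1" by simp
lemma Y_le_pi: "Y x \<le> \<pi> x"
  using exp_ge_add_one_self[of "- \<pi> x"] by simp
lemma Z_ge_pi: "Z x \<ge> \<pi> x"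
  using exp_ge_add_one_self[of "\<pi> x"] by linarith

lemma pi_low: "fst x \<noteq> k \<Longrightarrow> exp (\<pi> x) \<le> r"
proof -
  assume "fst x \<noteq> k"
  then have pe: "\<pi> x = 2 / real l * (r / real m) ^ (fst x + 1)" by (simp add: piw_def)
  have "(r / real m) ^ (fst x + 1) \<le> (r / real m) ^ 1"
    using rm r1 mpos by (intro power_decreasing) auto
  moreover have "2 / real l \<le> 2" using l1 by (simp add: divide_le_eq)
  ultimately have "\<pi> x \<le> 2 * (r / real m)" unfolding pe
    using r1 mpos by (intro mult_mono) auto
  also have "\<dots> \<le> ln r" using mln by simp
  finally show ?thesis using r1 by (metis exp_le_cancel_iff exp_ln less_trans zero_less_one)
qed

lemma Z_top: "fst x = k \<Longrightarrow> Z x = 2 * r ^ (k+1)"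
proof -
  assume "fst x = k"
  moreover have "0 < 1 + 2 * r ^ (k+1)" using r1 by (simp add: add_pos_nonneg)
  ultimately show ?thesis by (simp add: piw_def)
qed

lemma delta_le: "\<delta> \<le> r"
proof -
  have "(2 * r) ^ k \<le> real m ^ k" using mr r1 by (intro power_mono) auto
  moreover have "2 * r ^ k \<le> (2 * r) ^ k" using k2 r1
    by (simp add: power_mult_distrib) (metis mult_right_mono one_le_power order_less_imp_le
        self_le_power zero_less_numeral numeral_le_iff semiring_norm(69) le_numeral_extra(1)
        one_le_numeral power_increasing power_one_right less_le_trans zero_le_power pos2 zero_less_one)
  moreover have "real m ^ k \<le> real l * real m ^ k"
  proof -
    have "1 \<le> real l" using l1 by simp
    then show ?thesis using mult_right_mono[of 1 "real l" "real m ^ k"] mpos by simp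
  qed
  ultimately have "2 * r ^ k \<le> real l * real m ^ k" by linarith
  then have "r * (2 * r ^ k) \<le> r * (real l * real m ^ k)" using r1 by simp
  moreover have "real l * real m ^ k > 0" using l1 mpos by simp
  ultimately show ?thesis by (simp add: divide_le_eq algebra_simps)
qed

abbreviation "dd v \<equiv> real (card (out_nbrs VV EE v))"

definition oy :: "nat \<times> nat \<times> nat \<Rightarrow> real" where
  "oy v = (\<Sum>w\<in>out_nbrs VV EE v. Y w) / dd v"

definition IW :: "(nat \<times> nat \<times> nat) set \<Rightarrow> nat \<times> nat \<times> nat \<Rightarrow> real" where
  "IW S x = (\<Sum>v\<in>{v \<in> VV. EE v x}. (Z x - (if v \<in> S \<and> fst x = k then Z x else 0)) / dd v)"

definition low :: "(nat \<times> nat \<times> nat) set \<Rightarrow> nat \<times> nat \<times> nat \<Rightarrow> real" where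
  "low S x = (if x = (0,0,0) then r else 0) - (if fst x = k then (if (0,0,0) \<in> S then \<delta> else 0) else 0)"

lemma oy_le: "v \<in> VV \<Longrightarrow> (\<And>w. w \<in> out_nbrs VV EE v \<Longrightarrow> Y w \<le> B) \<Longrightarrow> oy v \<le> B"
  unfolding oy_def by (rule avg_le) (auto simp: G.fin_out out_ne)

lemma pv_star: "IW S (0,0,0) - r * oy (0,0,0) \<ge> low S (0,0,0)"
proof -
  have "IW S (0,0,0) = (\<Sum>v\<in>mf_layer k l m 1. Z (0,0,0))"
    unfolding IW_def in_star
  proof (intro sum.cong refl)
    fix v assume v: "v \<in> mf_layer k l m 1"
    obtain a j t where vt: "v = (a,j,t)" by (cases v) auto
    have "v = (1,j,t)" "(1,j,t) \<in> VV" using v vt k2 by (auto simp: mem_layer mem_V)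
    then have "dd v = 1" using out_one by simp
    then show "(Z (0,0,0) - (if v \<in> S \<and> fst (0::nat,0::nat,0::nat) = k then Z (0,0,0) else 0)) / dd v = Z (0,0,0)"
      using k2 by simp
  qed
  also have "\<dots> = real l * real m * Z (0,0,0)" using k2 by (simp add: card_layer)
  finally have iw: "IW S (0,0,0) = real l * real m * Z (0,0,0)" .
  have "Z (0,0,0) \<ge> 2 / real l * (r / real m)" using Z_ge_pi[of "(0,0,0)"] k2 by (simp add: piw_def)
  then have "real l * real m * Z (0,0,0) \<ge> real l * real m * (2 / real l * (r / real m))"
    using l1 mpos by (intro mult_left_mono) auto
  also have "real l * real m * (2 / real l * (r / real m)) = 2 * r" using l1 mpos by simp
  finally have "IW S (0,0,0) \<ge> 2 * r" using iw by simp
  moreover have "oy (0,0,0) \<le> 1" by (rule oy_le) (auto simp: mem_V)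
  moreover have "low S (0,0,0) = r" using k2 by (simp add: low_def)
  moreover have "r * oy (0,0,0) \<le> r * 1" using r1 \<open>oy (0,0,0) \<le> 1\<close> by (intro mult_left_mono) auto
  ultimately show ?thesis by linarith
qed

lemma pv_mid:
  assumes x: "(a,j,t) \<in> VV" and a: "1 \<le> a" "a < k"
  shows "IW S (a,j,t) - r * oy (a,j,t) \<ge> low S (a,j,t)"
proof -
  have mp: "real m ^ a > 0" using mpos by simp
  have "IW S (a,j,t) = (\<Sum>v\<in>blk m (a+1) j. Z (a,j,t) / real m ^ a)"
    unfolding IW_def in_mid[OF x a]
  proof (intro sum.cong refl)
    fix v assume v: "v \<in> blk m (a+1) j"
    then obtain t' where vt: "v = (a+1,j,t')" "t' < m^(a+1)" by (auto simp: blk_def)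
    have "(a+1,j,t') \<in> VV" using vt x a by (auto simp: mem_V)
    then have "dd v = real m ^ a" using out_high[of "a+1" j t'] vt a by (simp add: card_blk)
    then show "(Z (a,j,t) - (if v \<in> S \<and> fst (a,j,t) = k then Z (a,j,t) else 0)) / dd v = Z (a,j,t) / real m ^ a"
      using a by simp
  qed
  also have "\<dots> = real m * Z (a,j,t)" using mp by (simp add: card_blk)
  finally have iw: "IW S (a,j,t) = real m * Z (a,j,t)" .
  have "Z (a,j,t) \<ge> 2 / real l * (r / real m) ^ (a+1)" using Z_ge_pi[of "(a,j,t)"] a by (simp add: piw_def)
  then have "real m * Z (a,j,t) \<ge> real m * (2 / real l * (r / real m) ^ (a+1))"
    using mpos by (intro mult_left_mono) auto
  also have "real m * (2 / real l * (r / real m) ^ (a+1)) = r * (2 / real l * (r / real m) ^ a)"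
    using mpos by (simp add: field_simps)
  finally have iwb: "IW S (a,j,t) \<ge> r * (2 / real l * (r / real m) ^ a)" using iw by simp
  have "oy (a,j,t) \<le> 2 / real l * (r / real m) ^ a"
  proof (rule oy_le[OF x])
    fix w assume w: "w \<in> out_nbrs VV EE (a,j,t)"
    have "fst w = a - 1"
    proof (cases "a = 1")
      case True then show ?thesis using w out_one x by auto
    next
      case False then show ?thesis using w out_high[OF x] a by (auto simp: blk_def)
    qed
    then have "fst w \<noteq> k" "fst w + 1 = a" using a by auto
    then have "\<pi> w = 2 / real l * (r / real m) ^ a" by (simp add: piw_def)
    then show "Y w \<le> 2 / real l * (r / real m) ^ a" using Y_le_pi[of w] by simp
  qed
  then have "r * oy (a,j,t) \<le> r * (2 / real l * (r / real m) ^ a)" using r1 by (intro mult_left_mono) auto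
  moreover have "low S (a,j,t) = 0" using a by (simp add: low_def)
  ultimately show ?thesis using iwb by linarith
qed

lemma pv_top:
  assumes x: "(k,j,t) \<in> VV"
  shows "IW S (k,j,t) - r * oy (k,j,t) \<ge> low S (k,j,t)"
proof -
  have lm: "real l * real m ^ k > 0" using l1 mpos by simp
  have "IW S (k,j,t) = (Z (k,j,t) - (if (0,0,0) \<in> S then Z (k,j,t) else 0)) / (real l * real m ^ k)"
    unfolding IW_def in_top[OF x] using k2 by (simp add: out_star card_layer)
  also have "\<dots> = (if (0,0,0) \<in> S then 0 else 2 * r ^ (k+1) / (real l * real m ^ k))"
    using Z_top[of "(k,j,t)"] by simp
  finally have iw: "IW S (k,j,t) = (if (0,0,0) \<in> S then 0 else \<delta>)" .
  have "oy (k,j,t) \<le> 2 / real l * (r / real m) ^ k"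
  proof (rule oy_le[OF x])
    fix w assume w: "w \<in> out_nbrs VV EE (k,j,t)"
    have "fst w = k - 1" using w out_high[OF x] k2 by (auto simp: blk_def)
    then have "fst w \<noteq> k" "fst w + 1 = k" using k2 by auto
    then have "\<pi> w = 2 / real l * (r / real m) ^ k" by (simp add: piw_def)
    then show "Y w \<le> 2 / real l * (r / real m) ^ k" using Y_le_pi[of w] by simp
  qed
  then have "r * oy (k,j,t) \<le> r * (2 / real l * (r / real m) ^ k)" using r1 by (intro mult_left_mono) auto
  also have "r * (2 / real l * (r / real m) ^ k) = \<delta>" using mpos l1 by (simp add: field_simps power_divide)
  finally have "r * oy (k,j,t) \<le> \<delta>" .
  moreover have "low S (k,j,t) = - (if (0,0,0) \<in> S then \<delta> else 0)" using k2 by (simp add: low_def)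
  ultimately show ?thesis using iw by (cases "(0,0,0) \<in> S") auto
qed

lemma per_vertex: "x \<in> VV \<Longrightarrow> IW S x - r * oy x \<ge> low S x"
proof -
  assume x: "x \<in> VV"
  obtain a j t where xt: "x = (a,j,t)" by (cases x) auto
  show ?thesis
  proof (cases "a = 0")
    case True then have "x = (0,0,0)" using x xt by (auto simp: mem_V)
    then show ?thesis using pv_star by simp
  next
    case False
    then have a: "1 \<le> a" "a \<le> k" using x xt by (auto simp: mem_V)
    show ?thesis
    proof (cases "a = k")
      case True then show ?thesis using pv_top x xt by simp
    next
      case False then show ?thesis using pv_mid x xt a by simp
    qed
  qed
qed

lemma pointwise:
  "fitness r S v * G.psi \<pi> S v w \<ge>
     (if w \<in> S then Z w - (if v \<in> S \<and> fst w = k then Z w else 0) else 0) - (if v \<in> S then r * Y w else 0)"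
proof -
  have Ey: "exp (- \<pi> w) = 1 / exp (\<pi> w)" by (simp add: exp_minus field_simps)
  have E1: "exp (\<pi> w) \<ge> 1" using pi_nonneg[of w] by simp
  have key: "Z w - r * Y w \<le> 0" if "fst w \<noteq> k"
  proof -
    have Er: "exp (\<pi> w) \<le> r" using pi_low[OF that] .
    have "Z w - r * Y w = (exp (\<pi> w) - 1) * (exp (\<pi> w) - r) / exp (\<pi> w)"
      using E1 unfolding Ey by (simp add: field_simps)
    also have "\<dots> \<le> 0" using E1 Er by (intro divide_nonpos_pos mult_nonneg_nonpos) auto
    finally show ?thesis .
  qed
  have "r * Y w \<ge> 0" using Y_nonneg[of w] r1 by simp
  then show ?thesis using key
    by (cases "v \<in> S"; cases "w \<in> S"; cases "fst w = k") (auto simp: G.psi_def fitness_def algebra_simps)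
qed

lemma low_sum: "finite S \<Longrightarrow> card {x \<in> S. fst x = k} \<le> 1 \<Longrightarrow> (\<Sum>x\<in>S. low S x) \<ge> 0"
proof -
  assume fin: "finite S" and c: "card {x \<in> S. fst x = k} \<le> 1"
  define e where "e = (if (0,0,0) \<in> S then \<delta> else 0)"
  have "(\<Sum>x\<in>S. low S x) = (\<Sum>x\<in>S. if x = (0,0,0) then r else 0) - (\<Sum>x\<in>S. if fst x = k then e else 0)"
    unfolding low_def e_def by (rule sum_subtractf)
  also have "(\<Sum>x\<in>S. if x = (0,0,0) then r else 0) = (if (0,0,0) \<in> S then r else 0)"
    using fin by (simp add: sum.delta')
  also have "(\<Sum>x\<in>S. if fst x = k then e else 0) = real (card {x \<in> S. fst x = k}) * e"
    using fin by (simp add: sum.inter_filter[symmetric])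
  finally have eq: "(\<Sum>x\<in>S. low S x) = (if (0,0,0) \<in> S then r else 0) - real (card {x \<in> S. fst x = k}) * e" .
  have dpos: "\<delta> \<ge> 0" using r1 l1 mpos by simp
  have "real (card {x \<in> S. fst x = k}) * e \<le> 1 * e"
    using c dpos by (intro mult_right_mono) (auto simp: e_def)
  then show ?thesis using eq delta_le r1 by (auto simp: e_def)
qed

lemma Q_nonneg:
  assumes S: "S \<subseteq> VV" and c: "card {x \<in> S. fst x = k} \<le> 1"
  shows "0 \<le> (\<Sum>v\<in>VV. \<Sum>w\<in>out_nbrs VV EE v. fitness r S v * G.psi \<pi> S v w / dd v)"
proof -
  have finS: "finite S" using S fin_V finite_subset by blast
  define A1 where "A1 v w = (if w \<in> S then Z w - (if v \<in> S \<and> fst w = k then Z w else 0) else 0)" for v w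
  define A2 where "A2 v w = (if v \<in> S then r * Y w else 0)" for v w
  have "(\<Sum>v\<in>VV. \<Sum>w\<in>out_nbrs VV EE v. (A1 v w - A2 v w) / dd v)
      \<le> (\<Sum>v\<in>VV. \<Sum>w\<in>out_nbrs VV EE v. fitness r S v * G.psi \<pi> S v w / dd v)"
    unfolding A1_def A2_def by (intro sum_mono divide_right_mono pointwise) auto
  moreover have "(\<Sum>v\<in>VV. \<Sum>w\<in>out_nbrs VV EE v. (A1 v w - A2 v w) / dd v)
      = (\<Sum>v\<in>VV. \<Sum>w\<in>out_nbrs VV EE v. A1 v w / dd v) - (\<Sum>v\<in>VV. \<Sum>w\<in>out_nbrs VV EE v. A2 v w / dd v)"
    by (simp add: diff_divide_distrib sum_subtractf)
  moreover have "(\<Sum>v\<in>VV. \<Sum>w\<in>out_nbrs VV EE v. A2 v w / dd v) = (\<Sum>v\<in>S. r * oy v)"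
  proof -
    have "(\<Sum>w\<in>out_nbrs VV EE v. A2 v w / dd v) = (if v \<in> S then r * oy v else 0)" for v
      by (cases "v \<in> S") (simp_all add: A2_def oy_def sum_divide_distrib[symmetric] sum_distrib_left[symmetric])
    then have "(\<Sum>v\<in>VV. \<Sum>w\<in>out_nbrs VV EE v. A2 v w / dd v) = (\<Sum>v\<in>VV. if v \<in> S then r * oy v else 0)"
      by simp
    also have "\<dots> = (\<Sum>v\<in>VV \<inter> S. r * oy v)" using fin_V by (simp add: sum.inter_restrict)
    also have "VV \<inter> S = S" using S by auto
    finally show ?thesis .
  qed
  moreover have "(\<Sum>v\<in>VV. \<Sum>w\<in>out_nbrs VV EE v. A1 v w / dd v) = (\<Sum>w\<in>S. IW S w)"
  proof -
    have "(\<Sum>v\<in>VV. \<Sum>w\<in>out_nbrs VV EE v. A1 v w / dd v)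
        = (\<Sum>v\<in>VV. \<Sum>w\<in>{w. w \<in> VV \<and> EE v w}. A1 v w / dd v)"
      by (simp add: out_nbrs_def)
    also have "\<dots> = (\<Sum>w\<in>VV. \<Sum>v\<in>{v. v \<in> VV \<and> EE v w}. A1 v w / dd v)"
      by (rule sum.swap_restrict[OF fin_V fin_V])
    also have "\<dots> = (\<Sum>w\<in>VV. if w \<in> S then IW S w else 0)"
      by (intro sum.cong refl) (simp add: A1_def IW_def)
    also have "\<dots> = (\<Sum>w\<in>VV \<inter> S. IW S w)" using fin_V by (simp add: sum.inter_restrict)
    also have "VV \<inter> S = S" using S by auto
    finally show ?thesis .
  qed
  moreover have "(\<Sum>x\<in>S. low S x) \<le> (\<Sum>x\<in>S. IW S x - r * oy x)"
    using S per_vertex by (intro sum_mono) auto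
  moreover have "(\<Sum>x\<in>S. IW S x - r * oy x) = (\<Sum>x\<in>S. IW S x) - (\<Sum>x\<in>S. r * oy x)"
    by (rule sum_subtractf)
  ultimately show ?thesis using low_sum[OF finS c] by linarith
qed

abbreviation "bb \<equiv> ln (1 + 2 * r ^ (k+1))"

lemma bb_pos: "bb > 0"
  using r1 by (intro ln_gt_zero) (simp add: add_pos_nonneg)

lemma X_top: "S \<subseteq> VV \<Longrightarrow> real (card {x \<in> S. fst x = k}) * bb \<le> (\<Sum>x\<in>S. \<pi> x)"
proof -
  assume S: "S \<subseteq> VV"
  have finS: "finite S" using S fin_V finite_subset by blast
  have "real (card {x \<in> S. fst x = k}) * bb = (\<Sum>x\<in>{x \<in> S. fst x = k}. \<pi> x)"
    by (simp add: piw_def)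
  also have "\<dots> \<le> (\<Sum>x\<in>S. \<pi> x)"
    using finS pi_nonneg by (intro sum_mono2) auto
  finally show ?thesis .
qed

theorem ext_bound:
  assumes x0: "x0 \<in> mf_layer k l m k"
  shows "extinction_prob VV EE r {x0} \<ge> exp (- bb) - exp (- 2 * bb)"
proof -
  define g where "g S = exp (- (\<Sum>x\<in>S. \<pi> x)) - exp (- 2 * bb)" for S
  have "k \<in> {1..k}" using k2 by simp
  then have x0V: "x0 \<in> VV" using x0 unfolding mf_V_def by blast
  have "g {x0} \<le> extinction_prob VV EE r {x0}"
  proof (rule G.max_principle)
    show "g {} \<le> 1" by (simp add: g_def)
    have "card (mf_layer k l m k) \<ge> 2"
    proof -
      have "real m \<ge> 2" using mr r1 by linarith
      then have "m \<ge> 2" by simp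
      moreover have "m \<le> m ^ k" using k2 m1 by (simp add: self_le_power)
      moreover have "m ^ k \<le> l * m ^ k" using l1 by simp
      ultimately have "2 \<le> l * m ^ k" by linarith
      then show ?thesis using k2 by (simp add: card_layer)
    qed
    moreover have "{x \<in> VV. fst x = k} \<supseteq> mf_layer k l m k"
      by (auto simp: mf_V_def mf_layer_def)
    moreover have "card (mf_layer k l m k) \<le> card {x \<in> VV. fst x = k}"
      by (rule card_mono) (use fin_V \<open>{x \<in> VV. fst x = k} \<supseteq> mf_layer k l m k\<close> in auto)
    ultimately have "card {x \<in> VV. fst x = k} \<ge> 2" by linarith
    then have "real (card {x \<in> VV. fst x = k}) * bb \<ge> 2 * bb" using bb_pos by simp
    then have "(\<Sum>x\<in>VV. \<pi> x) \<ge> 2 * bb" using X_top[of VV] by simp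
    then show "g VV \<le> 0" by (simp add: g_def)
  next
    fix S assume S: "S \<subseteq> VV" "S \<noteq> {}" "S \<noteq> VV" "extinction_prob VV EE r S < g S"
    have finS: "finite S" using S fin_V finite_subset by blast
    have "g S > 0" using S(4) G.p_bounds(1)[of S] by linarith
    then have "(\<Sum>x\<in>S. \<pi> x) < 2 * bb" by (simp add: g_def)
    then have "real (card {x \<in> S. fst x = k}) * bb < 2 * bb" using X_top[OF S(1)] by linarith
    then have "real (card {x \<in> S. fst x = k}) < 2" using bb_pos by (simp add: mult_less_cancel_right)
    then have "card {x \<in> S. fst x = k} \<le> 1" by simp
    have "Tm VV EE r g S - g S = exp (- (\<Sum>x\<in>S. \<pi> x)) / total_fitness VV r S *
       (\<Sum>v\<in>VV. \<Sum>w\<in>out_nbrs VV EE v. fitness r S v * G.psi \<pi> S v w / dd v)"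
      using G.pot[OF finS, of \<pi> "exp (- 2 * bb)"] unfolding g_def[abs_def] by simp
    also have "\<dots> \<ge> 0"
      using Q_nonneg[OF S(1) \<open>card {x \<in> S. fst x = k} \<le> 1\<close>] G.W_pos[of S]
      by (intro mult_nonneg_nonneg) auto
    finally show "g S \<le> Tm VV EE r g S" by simp
  next
    fix S assume "S \<subseteq> VV" "S \<noteq> {}" "S \<noteq> VV"
    then show "\<exists>v\<in>VV - S. \<exists>w\<in>S. EE v w" by (rule cross)
  qed (use x0V in auto)
  moreover have "\<pi> x0 = bb" using x0 by (auto simp: piw_def mf_layer_def)
  ultimately show ?thesis by (simp add: g_def)
qed

end



lemma final_arith:
  fixes r L :: real and k :: nat
  assumes r1: "r > 1" and L: "L \<ge> 9 * r / 2"
  shows "1 / (r ^ k * L) \<le> exp (- ln (1 + 2 * r ^ (k+1))) - exp (- 2 * ln (1 + 2 * r ^ (k+1)))"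
proof -
  define R where "R = r ^ (k+1)"
  have R1: "R \<ge> 1" unfolding R_def by (rule one_le_power) (use r1 in simp)
  have pos: "1 + 2 * R > 0" using R1 by simp
  have e1: "exp (- ln (1 + 2 * R)) = 1 / (1 + 2 * R)" using pos by (simp add: exp_minus inverse_eq_divide)
  have "exp (- 2 * ln (1 + 2 * R)) = exp (- ln (1 + 2 * R)) ^ 2"
    using exp_of_nat_mult[of 2 "- ln (1 + 2 * R)"] by simp
  then have e2: "exp (- 2 * ln (1 + 2 * R)) = 1 / (1 + 2 * R)^2"
    using e1 by (simp add: power_divide)
  have gen: "1 / x - 1 / x^2 = (x - 1) / x^2" if "x > 0" for x :: real
    using that by (simp add: field_simps power2_eq_square)
  have diff: "1 / (1 + 2 * R) - 1 / (1 + 2 * R)^2 = 2 * R / (1 + 2 * R)^2"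
    using gen[OF pos] by simp
  have "(1 + 2 * R)^2 \<le> (3 * R)^2" using R1 by (intro power_mono) auto
  then have "2 * R / (3 * R)^2 \<le> 2 * R / (1 + 2 * R)^2"
    using R1 pos by (intro divide_left_mono) auto
  moreover have "2 * R / (3 * R)^2 = 2 / (9 * R)" using R1 by (simp add: field_simps power2_eq_square)
  ultimately have low: "2 / (9 * R) \<le> 2 * R / (1 + 2 * R)^2" by simp
  have rk: "r ^ k > 0" using r1 by simp
  have h1: "r ^ k * (9 * r / 2) \<le> r ^ k * L" using L rk by (intro mult_left_mono) auto
  have h2: "0 < r ^ k * (9 * r / 2)" using rk r1 by simp
  have "1 / (r ^ k * L) \<le> 1 / (r ^ k * (9 * r / 2))"
    by (rule frac_le[of 1 1, OF _ _ h2 h1]) simp_all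
  also have "1 / (r ^ k * (9 * r / 2)) = 2 / (9 * R)" unfolding R_def by (simp add: field_simps)
  finally have c: "1 / (r ^ k * L) \<le> 2 / (9 * R)" .
  show ?thesis using c low diff e1 e2 unfolding R_def by linarith
qed


theorem lemma5p28:
  fixes r :: real
  assumes "r > 1"
  shows "\<exists>n0::nat. n0 > 0 \<and>
    (\<forall>k l m :: nat. \<forall>x0.
       let n = card (mf_V k l m) in
       k > 0 \<and> l > 0 \<and> m > 0 \<and> n \<ge> n0 \<and>
       real m \<ge> r powr sqrt (log r (real n)) \<and>
       2 \<le> k \<and> real k \<le> sqrt (log r (real n)) \<and>
       x0 \<in> mf_layer k l m k \<longrightarrow>
       extinction_prob (mf_V k l m) (mf_E k l m) r {x0}
         \<ge> 1 / (r ^ k * ln (real n) powr (real_of_int (ceiling (2 * log r 20)) + 7)))"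
proof -
  have r1: "r > 1" by fact
  have lnr: "ln r > 0" using r1 by simp
  define M0 where "M0 = 2 * r / ln r + 2 * r + 2"
  have M0: "M0 > 1" using r1 lnr unfolding M0_def by (smt (verit) divide_nonneg_pos)
  define B where "B = max (exp (9 * r / 2)) (r powr ((log r M0)^2))"
  define n0 where "n0 = nat (ceiling B) + 1"
  show ?thesis
  proof (intro exI[of _ n0] conjI allI)
    show "n0 > 0" by (simp add: n0_def)
    fix k l m :: nat and x0
    define n where "n = card (mf_V k l m)"
    show "let n = card (mf_V k l m) in
       k > 0 \<and> l > 0 \<and> m > 0 \<and> n \<ge> n0 \<and>
       real m \<ge> r powr sqrt (log r (real n)) \<and>
       2 \<le> k \<and> real k \<le> sqrt (log r (real n)) \<and>
       x0 \<in> mf_layer k l m k \<longrightarrow>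
       extinction_prob (mf_V k l m) (mf_E k l m) r {x0}
         \<ge> 1 / (r ^ k * ln (real n) powr (real_of_int (ceiling (2 * log r 20)) + 7))"
      unfolding Let_def n_def[symmetric]
    proof (intro impI)
    assume H: "k > 0 \<and> l > 0 \<and> m > 0 \<and> n \<ge> n0 \<and>
       real m \<ge> r powr sqrt (log r (real n)) \<and>
       2 \<le> k \<and> real k \<le> sqrt (log r (real n)) \<and>
       x0 \<in> mf_layer k l m k"
    have H': "k > 0" "l > 0" "m > 0" "n \<ge> n0" "real m \<ge> r powr sqrt (log r (real n))"
        "2 \<le> k" "x0 \<in> mf_layer k l m k"
      using H by auto
    have "real n \<ge> real n0" using H'(4) by simp
    moreover have "real n0 \<ge> B" unfolding n0_def by linarith
    ultimately have nB: "real n \<ge> B" by linarith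
    have npos: "real n > 0" using nB unfolding B_def by (smt (verit) exp_gt_zero max.cobounded1)
    have "real n \<ge> r powr ((log r M0)^2)" using nB unfolding B_def by simp
    then have "log r (real n) \<ge> log r (r powr ((log r M0)^2))"
      using r1 npos by (subst log_le_cancel_iff) auto
    then have "log r (real n) \<ge> (log r M0)^2" using r1 by (simp add: log_powr_cancel)
    then have "sqrt (log r (real n)) \<ge> sqrt ((log r M0)^2)" by (rule real_sqrt_le_mono)
    moreover have "log r M0 > 0" using M0 r1 by simp
    ultimately have "sqrt (log r (real n)) \<ge> log r M0" by simp
    then have "r powr sqrt (log r (real n)) \<ge> r powr log r M0" using r1 by (intro powr_mono) auto
    then have mM0: "real m \<ge> M0" using H'(5) M0 r1 by simp
    have m2r: "2 * r \<le> real m" using mM0 lnr r1 unfolding M0_def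
      by (smt (verit) divide_nonneg_pos)
    have "2 * r / ln r \<le> real m" using mM0 lnr r1 unfolding M0_def by (smt (verit))
    then have mln: "2 * r / real m \<le> ln r" using lnr H'(3)
      by (simp add: divide_le_eq mult.commute pos_divide_le_eq)
    interpret mfr k l m r
      by unfold_locales (use H' r1 m2r mln in auto)
    have ext: "extinction_prob (mf_V k l m) (mf_E k l m) r {x0}
        \<ge> exp (- bb) - exp (- 2 * bb)" by (rule ext_bound[OF H'(7)])
    have "real n \<ge> exp (9 * r / 2)" using nB unfolding B_def by simp
    then have lnn: "ln (real n) \<ge> 9 * r / 2" using npos by (metis ln_exp ln_le_cancel_iff exp_gt_zero)
    then have lnn1: "ln (real n) \<ge> 1" using r1 by linarith
    have "log r 20 > 0" using r1 by simp
    then have C0: "real_of_int (ceiling (2 * log r 20)) + 7 \<ge> 1"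
      by (smt (verit) ceiling_correct of_int_ceiling_le_add_one ceiling_le_zero)
    have "ln (real n) powr 1 \<le> ln (real n) powr (real_of_int (ceiling (2 * log r 20)) + 7)"
      using lnn1 C0 by (intro powr_mono) auto
    then have L: "ln (real n) powr (real_of_int (ceiling (2 * log r 20)) + 7) \<ge> 9 * r / 2"
      using lnn lnn1 by simp
    show "extinction_prob (mf_V k l m) (mf_E k l m) r {x0}
         \<ge> 1 / (r ^ k * ln (real n) powr (real_of_int (ceiling (2 * log r 20)) + 7))"
      using final_arith[OF r1 L, of k] ext by linarith
    qed
  qed
qed

end
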